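(* Let $d\ge2$, $\alpha\in[0,1]$, $|\phi_+\rangle=d^{-1/2}\sum_{i=1}^d|i\rangle\otimes|i\rangle$, and $\rho=\alpha\,\mathbb I/d^2+(1-\alpha)|\phi_+\rangle\langle\phi_+|$ on $\mathbb C^d\otimes\mathbb C^d$. Let $p_n=\mathrm{Tr}[(\rho^{T_A})^n]$. Then $p_3<p_2^2$ if and only if $\rho^{T_A}$ has a negative eigenvalue (which happens exactly when $\alpha<d/(d+1)$).
   Context: The partial transpose on the first factor $A$ is defined in the computational product basis by $(|k_A,k_B\rangle\langle l_A,l_B|)^{T_A}=|l_A,k_B\rangle\langle k_A,l_B|$. *)

theory Defs
  imports "Jordan_Normal_Form.Char_Poly"
begin

text \<open>Computational product basis of C^d (x) C^d: basis vector |i,j> (i,j < d)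
  is encoded as index i*d + j, so index r corresponds to (r div d, r mod d).\<close>

definition phi_plus :: "nat \<Rightarrow> complex vec" where
  "phi_plus d = vec (d*d) (\<lambda>r. if r div d = r mod d then complex_of_real (1 / sqrt (real d)) else 0)"

definition ket_bra :: "complex vec \<Rightarrow> complex mat" where
  "ket_bra v = mat (dim_vec v) (dim_vec v) (\<lambda>(r,c). v $ r * cnj (v $ c))"

definition iso_state :: "nat \<Rightarrow> real \<Rightarrow> complex mat" where
  "iso_state d \<alpha> = complex_of_real (\<alpha> / (real d)^2) \<cdot>\<^sub>m 1\<^sub>m (d*d)
     + complex_of_real (1 - \<alpha>) \<cdot>\<^sub>m ket_bra (phi_plus d)"

text \<open>Partial transpose on the first factor:
  (|kA,kB><lA,lB|)^{T_A} = |lA,kB><kA,lB|, i.e.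
  M^{T_A}_{(a,b),(c,e)} = M_{(c,b),(a,e)}.\<close>

definition partial_transpose_A :: "nat \<Rightarrow> complex mat \<Rightarrow> complex mat" where
  "partial_transpose_A d M = mat (d*d) (d*d)
     (\<lambda>(r,c). M $$ ((c div d) * d + r mod d, (r div d) * d + c mod d))"

definition mat_trace :: "complex mat \<Rightarrow> complex" where
  "mat_trace M = (\<Sum>i<dim_row M. M $$ (i,i))"

text \<open>p_n = Tr[(rho^{T_A})^n]; this trace is real (rho^{T_A} is Hermitian), we take its real part.\<close>

definition pt_moment :: "nat \<Rightarrow> real \<Rightarrow> nat \<Rightarrow> real" where
  "pt_moment d \<alpha> n = Re (mat_trace (partial_transpose_A d (iso_state d \<alpha>) ^\<^sub>m n))"

end

theory Submission
  imports Defs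
begin


definition sw :: "nat \<Rightarrow> nat \<Rightarrow> nat" where "sw d r = (r mod d) * d + r div d"

lemma sw_lt: assumes "r < d*d" shows "sw d r < d*d"
proof -
  have d: "d > 0" using assms by (cases d) auto
  have "r div d < d" using assms by (simp add: less_mult_imp_div_less)
  moreover have "r mod d < d" using d by simp
  ultimately have m: "r div d < d" "r mod d < d" by auto
  have "(r mod d) * d + r div d < (r mod d) * d + d" using m by simp
  also have "... = Suc (r mod d) * d" by simp
  also have "... \<le> d * d" using m by (metis mult_le_mono1 Suc_leI)
  finally show ?thesis unfolding sw_def .
qed

lemma sw_sw: assumes "r < d*d" shows "sw d (sw d r) = r"
proof -
  have d: "d > 0" using assms by (cases d) auto
  have "r div d < d" using assms by (simp add: less_mult_imp_div_less)
  then show ?thesis unfolding sw_def using d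
    by simp
qed

definition Fm :: "nat \<Rightarrow> complex mat" where
  "Fm d = mat (d*d) (d*d) (\<lambda>(r,c). if c = sw d r then 1 else 0)"

lemma Fm_carrier: "Fm d \<in> carrier_mat (d*d) (d*d)" by (simp add: Fm_def)

lemma Fm_sq: "Fm d * Fm d = 1\<^sub>m (d*d)"
proof (rule eq_matI)
  fix i j assume i: "i < dim_row (1\<^sub>m (d*d))" and j: "j < dim_col (1\<^sub>m (d*d))"
  have "(Fm d * Fm d) $$ (i,j) = (\<Sum>k<d*d. (if k = sw d i then 1 else 0) * (if j = sw d k then 1 else 0))"
    using i j by (simp add: Fm_def scalar_prod_def atLeast0LessThan)
  also have "... = (\<Sum>k<d*d. if k = sw d i then (if j = sw d k then 1 else 0) else 0)"
    by (rule sum.cong) auto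
  also have "... = (if j = sw d (sw d i) then 1 else 0)"
    using sw_lt[of i d] i by (simp add: sum.delta')
  also have "... = 1\<^sub>m (d*d) $$ (i,j)" using i j sw_sw[of i d] by simp
  finally show "(Fm d * Fm d) $$ (i,j) = 1\<^sub>m (d*d) $$ (i,j)" .
qed (auto simp: Fm_def)



lemma iso_entry:
  assumes "i < d*d" "j < d*d"
  shows "iso_state d \<alpha> $$ (i,j) = (if i = j then complex_of_real (\<alpha> / (real d)^2) else 0)
     + (if i div d = i mod d \<and> j div d = j mod d then complex_of_real ((1-\<alpha>) / real d) else 0)"
proof -
  have s: "complex_of_real (1 / sqrt (real d)) * cnj (complex_of_real (1 / sqrt (real d))) = complex_of_real (1 / real d)"
    by (simp flip: of_real_mult)
  show ?thesis using assms
    by (auto simp: iso_state_def ket_bra_def phi_plus_def s simp flip: of_real_mult)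
qed

lemma pt_eq:
  assumes d: "d > 0"
  shows "partial_transpose_A d (iso_state d \<alpha>) =
    complex_of_real (\<alpha> / (real d)^2) \<cdot>\<^sub>m 1\<^sub>m (d*d) + complex_of_real ((1-\<alpha>) / real d) \<cdot>\<^sub>m Fm d"
proof (rule eq_matI)
  fix r s assume r: "r < dim_row (complex_of_real (\<alpha> / (real d)^2) \<cdot>\<^sub>m 1\<^sub>m (d*d) + complex_of_real ((1-\<alpha>) / real d) \<cdot>\<^sub>m Fm d)"
    and s: "s < dim_col (complex_of_real (\<alpha> / (real d)^2) \<cdot>\<^sub>m 1\<^sub>m (d*d) + complex_of_real ((1-\<alpha>) / real d) \<cdot>\<^sub>m Fm d)"
  have r': "r < d*d" and s': "s < d*d" using r s by (auto simp: Fm_def)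
  have rd: "r div d < d" "s div d < d" using r' s' by (auto simp: less_mult_imp_div_less)
  have md: "r mod d < d" "s mod d < d" using d by auto
  define i where "i = (s div d) * d + r mod d"
  define j where "j = (r div d) * d + s mod d"
  have lt: "y * d + x < d * d" if "x < d" "y < d" for x y :: nat
  proof -
    have "y * d + x < y * d + d" using that by simp
    also have "... = Suc y*d" by simp
    also have "... \<le> d * d" using that by (metis mult_le_mono1 Suc_leI)
    finally show ?thesis .
  qed
  have i: "i < d*d" "j < d*d" unfolding i_def j_def using lt rd md by auto
  have idm: "i div d = s div d" "i mod d = r mod d" "j div d = r div d" "j mod d = s mod d"
    unfolding i_def j_def using d md by auto
  have eq1: "(i = j) = (r = s)"
  proof
    assume "i = j" then show "r = s" using idm by (metis div_mult_mod_eq)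
  qed (simp add: i_def j_def)
  have eq2: "(i div d = i mod d \<and> j div d = j mod d) = (s = sw d r)"
    unfolding idm sw_def
  proof
    assume h: "s div d = r mod d \<and> r div d = s mod d"
    have "s = (s div d) * d + s mod d" by simp
    then show "s = r mod d * d + r div d" using h by simp
  next
    assume h: "s = r mod d * d + r div d"
    have "s div d = r mod d" unfolding h using d rd by simp
    moreover have "s mod d = r div d" unfolding h using d rd by simp
    ultimately show "s div d = r mod d \<and> r div d = s mod d" by simp
  qed
  show "partial_transpose_A d (iso_state d \<alpha>) $$ (r, s) = (complex_of_real (\<alpha> / (real d)^2) \<cdot>\<^sub>m 1\<^sub>m (d*d) + complex_of_real ((1-\<alpha>) / real d) \<cdot>\<^sub>m Fm d) $$ (r, s)"
  proof -
    have L: "partial_transpose_A d (iso_state d \<alpha>) $$ (r, s) = iso_state d \<alpha> $$ (i, j)"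
      using r' s' unfolding partial_transpose_A_def i_def j_def by simp
    have R: "(complex_of_real (\<alpha> / (real d)^2) \<cdot>\<^sub>m 1\<^sub>m (d*d) + complex_of_real ((1-\<alpha>) / real d) \<cdot>\<^sub>m Fm d) $$ (r, s)
       = (if r = s then complex_of_real (\<alpha> / (real d)^2) else 0) + (if s = sw d r then complex_of_real ((1-\<alpha>) / real d) else 0)"
      using r' s' by (simp add: Fm_def)
    show ?thesis unfolding L R iso_entry[OF i] eq1 eq2 ..
  qed
qed (simp_all add: partial_transpose_A_def Fm_def)



lemma lin_mult:
  fixes p q r s :: complex
  shows "(p \<cdot>\<^sub>m 1\<^sub>m (d*d) + q \<cdot>\<^sub>m Fm d) * (r \<cdot>\<^sub>m 1\<^sub>m (d*d) + s \<cdot>\<^sub>m Fm d)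
       = (p*r+q*s) \<cdot>\<^sub>m 1\<^sub>m (d*d) + (p*s+q*r) \<cdot>\<^sub>m Fm d"
proof -
  have F: "Fm d \<in> carrier_mat (d*d) (d*d)" by (rule Fm_carrier)
  have I: "1\<^sub>m (d*d) \<in> carrier_mat (d*d) (d*d)" by simp
  define B where "B = r \<cdot>\<^sub>m 1\<^sub>m (d*d) + s \<cdot>\<^sub>m Fm d"
  have B: "B \<in> carrier_mat (d*d) (d*d)" using F by (simp add: B_def)
  have "(p \<cdot>\<^sub>m 1\<^sub>m (d*d) + q \<cdot>\<^sub>m Fm d) * B = (p \<cdot>\<^sub>m 1\<^sub>m (d*d)) * B + (q \<cdot>\<^sub>m Fm d) * B"
    using F B by (intro add_mult_distrib_mat) auto
  also have "... = p \<cdot>\<^sub>m B + q \<cdot>\<^sub>m (Fm d * B)"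
    using F B by (simp add: mult_smult_assoc_mat[OF I B] mult_smult_assoc_mat[OF F B])
  also have "Fm d * B = r \<cdot>\<^sub>m Fm d + s \<cdot>\<^sub>m 1\<^sub>m (d*d)"
    unfolding B_def using F
    by (simp add: mult_add_distrib_mat[OF F smult_carrier_mat[OF I] smult_carrier_mat[OF F]] mult_smult_distrib[OF F I] mult_smult_distrib[OF F F] Fm_sq)
  finally have "(p \<cdot>\<^sub>m 1\<^sub>m (d*d) + q \<cdot>\<^sub>m Fm d) * (r \<cdot>\<^sub>m 1\<^sub>m (d*d) + s \<cdot>\<^sub>m Fm d)
     = p \<cdot>\<^sub>m B + q \<cdot>\<^sub>m (r \<cdot>\<^sub>m Fm d + s \<cdot>\<^sub>m 1\<^sub>m (d*d))" unfolding B_def .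
  also have "... = (p*r+q*s) \<cdot>\<^sub>m 1\<^sub>m (d*d) + (p*s+q*r) \<cdot>\<^sub>m Fm d"
    unfolding B_def by (rule eq_matI) (auto simp: Fm_def algebra_simps)
  finally show ?thesis .
qed

lemma sw_fix: assumes "r < d*d" shows "(r = sw d r) = (r div d = r mod d)"
proof -
  have d: "d > 0" using assms by (cases d) auto
  have rd: "r div d < d" using assms by (simp add: less_mult_imp_div_less)
  show ?thesis
  proof
    assume "r = sw d r"
    then have "r mod d = ((r mod d) * d + r div d) mod d" unfolding sw_def by simp
    also have "... = r div d" using rd by simp
    finally show "r div d = r mod d" by simp
  next
    assume "r div d = r mod d"
    then show "r = sw d r" unfolding sw_def by (metis div_mult_mod_eq)
  qed
qed

lemma card_fix: "card {r. r < d*d \<and> r = sw d r} = d"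
proof -
  have "{r. r < d*d \<and> r = sw d r} = (\<lambda>i. i*d+i) ` {..<d}"
  proof (rule equalityI; rule subsetI)
    fix r assume "r \<in> {r. r < d*d \<and> r = sw d r}"
    then have r: "r < d*d" "r div d = r mod d" using sw_fix by auto
    have "r div d < d" using r(1) by (simp add: less_mult_imp_div_less)
    moreover have "r = (r div d)*d + r div d" using div_mult_mod_eq[of r d] r(2) by simp
    ultimately show "r \<in> (\<lambda>i. i*d+i) ` {..<d}" by (intro image_eqI[where x="r div d"]) auto
  next
    fix r assume "r \<in> (\<lambda>i. i*d+i) ` {..<d}"
    then obtain i where i: "i < d" "r = i*d+i" by auto
    have "i*d + i < i*d + d" using i by simp
    also have "... = Suc i * d" by simp
    also have "... \<le> d*d" using i by (metis mult_le_mono1 Suc_leI)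
    finally have "r < d*d" using i by simp
    moreover have "r div d = r mod d" using i by auto
    ultimately show "r \<in> {r. r < d*d \<and> r = sw d r}" using sw_fix by auto
  qed
  moreover have "inj_on (\<lambda>i. i*d+i) {..<d}"
  proof (rule inj_onI)
    fix i j assume "i \<in> {..<d}" "j \<in> {..<d}" "i*d+i = j*d+j"
    then have "i * Suc d = j * Suc d" by (simp only: mult_Suc_right add.commute)
    then show "i = j" by (simp del: mult_Suc_right)
  qed
  ultimately show ?thesis by (simp add: card_image)
qed

lemma trace_lin: "mat_trace (x \<cdot>\<^sub>m 1\<^sub>m (d*d) + y \<cdot>\<^sub>m Fm d) = x * of_nat (d*d) + y * of_nat d"
proof -
  have "mat_trace (x \<cdot>\<^sub>m 1\<^sub>m (d*d) + y \<cdot>\<^sub>m Fm d) = (\<Sum>r<d*d. x + (if r = sw d r then y else 0))"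
    unfolding mat_trace_def by (intro sum.cong) (auto simp: Fm_def)
  also have "... = x * of_nat (d*d) + (\<Sum>r\<in>{r. r < d*d \<and> r = sw d r}. y)"
    by (simp add: sum.distrib sum.If_cases Collect_conj_eq lessThan_def Int_commute)
  also have "... = x * of_nat (d*d) + y * of_nat d" using card_fix[of d] by simp
  finally show ?thesis .
qed

lemma mv_entry:
  assumes "v \<in> carrier_vec (d*d)" "i < d*d"
  shows "((a \<cdot>\<^sub>m 1\<^sub>m (d*d) + c \<cdot>\<^sub>m Fm d) *\<^sub>v v) $ i = a * v $ i + c * v $ sw d i"
proof -
  have "((a \<cdot>\<^sub>m 1\<^sub>m (d*d) + c \<cdot>\<^sub>m Fm d) *\<^sub>v v) $ i
     = (\<Sum>j<d*d. (if i = j then a * v $ j else 0) + (if j = sw d i then c * v $ j else 0))"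
    using assms by (auto simp: mult_mat_vec_def scalar_prod_def Fm_def atLeast0LessThan
       distrib_right intro!: sum.cong split: if_splits)
  also have "... = a * v $ i + c * v $ sw d i"
    using assms sw_lt[of i d] by (simp add: sum.distrib sum.delta' distrib_right)
  finally show ?thesis .
qed



lemma poly_id:
  fixes a c D :: real
  shows "((a*a+c*c) * D^2 + (2*a*c) * D)^2 - ((a*a*a+3*a*c*c) * D^2 + (3*a*a*c+c*c*c) * D) * (D^2 * a + D * c)
    = - (D^2 * (D^2 - 1)) * (a^2 - c^2) * c^2"
  unfolding power2_eq_square by (simp add: algebra_simps)
lemma sq_less: fixes a c :: real assumes "a \<ge> 0" "c \<ge> 0" shows "(a^2 < c^2) = (a < c)"
proof
  assume h: "a^2 < c^2" show "a < c"
  proof (rule ccontr)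
    assume "\<not> a < c" then have "c \<le> a" by simp
    then have "c^2 \<le> a^2" using assms by (intro power_mono) auto
    then show False using h by simp
  qed
next
  assume "a < c" then show "a^2 < c^2" using assms by (intro power_strict_mono) auto
qed
lemma pos_mult_iff: fixes P X :: real assumes "P > 0" shows "(0 < P * X) = (0 < X)"
  using assms by (simp add: zero_less_mult_iff)

lemma moments:
  fixes d :: nat and \<alpha> :: real
  assumes d: "d > 0"
  defines "a \<equiv> \<alpha> / (real d)^2" and "c \<equiv> (1-\<alpha>) / real d"
  shows "pt_moment d \<alpha> 2 = (a*a+c*c) * (real d)^2 + (2*a*c) * real d"
    and "pt_moment d \<alpha> 3 = (a*a*a+3*a*c*c) * (real d)^2 + (3*a*a*c+c*c*c) * real d"
proof -
  let ?A = "partial_transpose_A d (iso_state d \<alpha>)"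
  have A: "?A = complex_of_real a \<cdot>\<^sub>m 1\<^sub>m (d*d) + complex_of_real c \<cdot>\<^sub>m Fm d"
    unfolding a_def c_def by (rule pt_eq[OF d])
  have dimA: "dim_row ?A = d*d" by (simp add: partial_transpose_A_def)
  have sq: "?A ^\<^sub>m 2 = ?A * ?A" by (simp add: numeral_2_eq_2 dimA)
  have A2: "?A ^\<^sub>m 2 = complex_of_real (a*a+c*c) \<cdot>\<^sub>m 1\<^sub>m (d*d) + complex_of_real (2*a*c) \<cdot>\<^sub>m Fm d"
    unfolding sq unfolding A lin_mult by (simp add: mult.commute mult.left_commute)
  have cu: "?A ^\<^sub>m 3 = ?A ^\<^sub>m 2 * ?A" by (simp add: numeral_3_eq_3 numeral_2_eq_2)
  have A3: "?A ^\<^sub>m 3 = complex_of_real (a*a*a+3*a*c*c) \<cdot>\<^sub>m 1\<^sub>m (d*d) + complex_of_real (3*a*a*c+c*c*c) \<cdot>\<^sub>m Fm d"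
    unfolding cu A2 unfolding A lin_mult by (simp add: ring_distribs mult.commute mult.left_commute add.commute)
  show "pt_moment d \<alpha> 2 = (a*a+c*c) * (real d)^2 + (2*a*c) * real d"
    unfolding pt_moment_def A2 trace_lin by (simp add: power2_eq_square)
  show "pt_moment d \<alpha> 3 = (a*a*a+3*a*c*c) * (real d)^2 + (3*a*a*c+c*c*c) * real d"
    unfolding pt_moment_def A3 trace_lin by (simp add: power2_eq_square)
qed


theorem mainTheorem5:
  fixes d :: nat and \<alpha> :: real
  assumes "d \<ge> 2" and "0 \<le> \<alpha>" and "\<alpha> \<le> 1"
  shows "(pt_moment d \<alpha> 3 < (pt_moment d \<alpha> 2)^2 \<longleftrightarrow>
            (\<exists>t::real. t < 0 \<and> eigenvalue (partial_transpose_A d (iso_state d \<alpha>)) (complex_of_real t)))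
       \<and> ((\<exists>t::real. t < 0 \<and> eigenvalue (partial_transpose_A d (iso_state d \<alpha>)) (complex_of_real t))
            \<longleftrightarrow> \<alpha> < real d / (real d + 1))"
proof -
  have d0: "d > 0" using assms(1) by simp
  define D where "D = real d"
  have D2: "D \<ge> 2" using assms(1) unfolding D_def by simp
  define a where "a = \<alpha> / (real d)^2"
  define c where "c = (1-\<alpha>) / real d"
  have a0: "a \<ge> 0" unfolding a_def using assms by simp
  have c0: "c \<ge> 0" unfolding c_def using assms by simp
  let ?A = "partial_transpose_A d (iso_state d \<alpha>)"
  have A: "?A = complex_of_real a \<cdot>\<^sub>m 1\<^sub>m (d*d) + complex_of_real c \<cdot>\<^sub>m Fm d"
    unfolding a_def c_def by (rule pt_eq[OF d0])
  have dimA: "dim_row ?A = d*d" by (simp add: partial_transpose_A_def)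
  have mv: "(?A *\<^sub>v v) $ i = complex_of_real a * v $ i + complex_of_real c * v $ sw d i"
    if "v \<in> carrier_vec (d*d)" "i < d*d" for v i
    unfolding A by (rule mv_entry[OF that])
  have dimAv: "dim_vec (?A *\<^sub>v v) = d*d" for v using dimA by simp
  have k3: "(a < c) = (\<alpha> < real d / (real d + 1))"
  proof -
    have "(a < c) = (\<alpha> / D^2 < (1-\<alpha>)/D)" unfolding a_def c_def D_def by simp
    also have "... = (\<alpha> < D * (1 - \<alpha>))" using D2 by (simp add: field_simps power2_eq_square)
    also have "... = (\<alpha> < D / (D+1))" using D2 by (simp add: field_simps)
    finally show ?thesis unfolding D_def .
  qed
  have k2: "(pt_moment d \<alpha> 3 < (pt_moment d \<alpha> 2)^2) = (a < c)"
  proof -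
    have h: "D^2 * a + D * c = 1" unfolding a_def c_def D_def using d0
      by (simp add: field_simps power2_eq_square)
    define p2 where "p2 = (a*a+c*c) * D^2 + (2*a*c) * D"
    define p3 where "p3 = (a*a*a+3*a*c*c) * D^2 + (3*a*a*c+c*c*c) * D"
    have m: "pt_moment d \<alpha> 2 = p2" "pt_moment d \<alpha> 3 = p3"
      using moments[OF d0, of \<alpha>] unfolding p2_def p3_def a_def c_def D_def by simp_all
    have "p2^2 - p3 = p2^2 - p3 * (D^2 * a + D * c)" using h by simp
    also have "... = - (D^2 * (D^2 - 1)) * (a^2 - c^2) * c^2"
      unfolding p2_def p3_def by (rule poly_id)
    finally have e: "p2^2 - p3 = - (D^2 * (D^2 - 1)) * (a^2 - c^2) * c^2" .
    have "D*D \<ge> 2*2" using D2 by (intro mult_mono) auto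
    then have D4: "D^2 \<ge> 4" by (simp add: power2_eq_square)
    have pos: "D^2 * (D^2 - 1) > 0" using D4 by (intro mult_pos_pos) auto
    show ?thesis
    proof (cases "c = 0")
      case True
      then show ?thesis using e m a0 by simp
    next
      case False
      then have cp: "c^2 > 0" by simp
      have "(p3 < p2^2) = (0 < - (D^2 * (D^2 - 1)) * (a^2 - c^2) * c^2)" using e by linarith
      also have "... = (0 < (D^2 * (D^2 - 1) * c^2) * (c^2 - a^2))" by (simp add: algebra_simps)
      also have "... = (0 < c^2 - a^2)" using pos cp by (intro pos_mult_iff) simp
      also have "... = (a^2 < c^2)" by simp
      also have "... = (a < c)" using a0 c0 by (rule sq_less)
      finally show ?thesis using m by simp
    qed
  qed
  have k1: "(\<exists>t::real. t < 0 \<and> eigenvalue ?A (complex_of_real t)) = (a < c)"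
  proof
    assume "\<exists>t::real. t < 0 \<and> eigenvalue ?A (complex_of_real t)"
    then obtain t v where t: "t < 0" and ev: "eigenvector ?A v (complex_of_real t)"
      unfolding eigenvalue_def by auto
    have vc: "v \<in> carrier_vec (d*d)" and v0: "v \<noteq> 0\<^sub>v (d*d)"
      and Av: "?A *\<^sub>v v = complex_of_real t \<cdot>\<^sub>v v"
      using ev dimA unfolding eigenvector_def by auto
    obtain i where i: "i < d*d" "v $ i \<noteq> 0"
    proof (rule ccontr)
      assume "\<not> thesis"
      then have "\<forall>i<d*d. v $ i = 0" using that by blast
      then have "v = 0\<^sub>v (d*d)" using vc by (intro eq_vecI) auto
      then show False using v0 by simp
    qed
    have si: "sw d i < d*d" using sw_lt[OF i(1)] .
    have e1: "complex_of_real a * v $ i + complex_of_real c * v $ sw d i = complex_of_real t * v $ i"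
      using arg_cong[OF Av, of "\<lambda>w. w $ i"] mv[OF vc i(1)] vc i by simp
    have e2: "complex_of_real a * v $ sw d i + complex_of_real c * v $ i = complex_of_real t * v $ sw d i"
      using arg_cong[OF Av, of "\<lambda>w. w $ sw d i"] mv[OF vc si] vc si sw_sw[OF i(1)] by simp
    have "(complex_of_real (c*c) - complex_of_real ((t-a)*(t-a))) * v $ i = 0"
    proof -
      have f1: "complex_of_real c * v $ sw d i = complex_of_real (t - a) * v $ i" using e1
        by (simp add: algebra_simps)
      have f2: "complex_of_real c * v $ i = complex_of_real (t - a) * v $ sw d i" using e2
        by (simp add: algebra_simps)
      have "complex_of_real c * (complex_of_real c * v $ i) = complex_of_real (t - a) * (complex_of_real c * v $ sw d i)"
        using f2 by (simp add: ac_simps)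
      also have "... = complex_of_real (t - a) * (complex_of_real (t - a) * v $ i)" using f1 by simp
      finally show ?thesis by (simp add: algebra_simps)
    qed
    then have "complex_of_real (c*c) = complex_of_real ((t-a)*(t-a))" using i(2) by simp
    then have "c*c = (t-a)*(t-a)" using of_real_eq_iff by blast
    then have "c = t - a \<or> c = -(t-a)" by (metis square_eq_iff)
    then show "a < c" using t a0 c0 by auto
  next
    assume ac: "a < c"
    define v :: "complex vec" where "v = vec (d*d) (\<lambda>k. if k = 1 then 1 else if k = d then -1 else 0)"
    have d1: "d \<noteq> 1" using assms(1) by simp
    have dd: "2*d \<le> d*d" using assms(1) by (rule mult_le_mono1)
    have lt: "1 < d*d" "d < d*d" using dd assms(1) by linarith+
    have sw1: "sw d 1 = d" using assms(1) by (simp add: sw_def)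
    have swd: "sw d d = 1" using d0 by (simp add: sw_def)
    have swk: "sw d k \<noteq> 1 \<and> sw d k \<noteq> d" if "k < d*d" "k \<noteq> 1" "k \<noteq> d" for k
    proof
      show "sw d k \<noteq> 1"
      proof
        assume "sw d k = 1"
        then have "sw d (sw d k) = d" using sw1 by simp
        then show False using sw_sw[OF that(1)] that(3) by simp
      qed
      show "sw d k \<noteq> d"
      proof
        assume "sw d k = d"
        then have "sw d (sw d k) = 1" using swd by simp
        then show False using sw_sw[OF that(1)] that(2) by simp
      qed
    qed
    have vc: "v \<in> carrier_vec (d*d)" by (simp add: v_def)
    have "eigenvector ?A v (complex_of_real (a - c))"
      unfolding eigenvector_def
    proof (intro conjI)
      show "v \<in> carrier_vec (dim_row ?A)" using vc dimA by simp
      show "v \<noteq> 0\<^sub>v (dim_row ?A)"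
      proof
        assume "v = 0\<^sub>v (dim_row ?A)"
        then have "v $ 1 = 0" using lt dimA by simp
        then show False using lt by (simp add: v_def)
      qed
      show "?A *\<^sub>v v = complex_of_real (a - c) \<cdot>\<^sub>v v"
      proof (rule eq_vecI)
        fix k assume "k < dim_vec (complex_of_real (a - c) \<cdot>\<^sub>v v)"
        then have k: "k < d*d" by (simp add: v_def)
        have sk: "sw d k < d*d" using sw_lt[OF k] .
        show "(?A *\<^sub>v v) $ k = (complex_of_real (a - c) \<cdot>\<^sub>v v) $ k"
        proof -
          have vk: "v $ k = (if k = 1 then 1 else if k = d then -1 else 0)" using k by (simp add: v_def)
          have vs: "v $ sw d k = (if sw d k = 1 then 1 else if sw d k = d then -1 else 0)" using sk by (simp add: v_def)
          have rhs: "(complex_of_real (a - c) \<cdot>\<^sub>v v) $ k = complex_of_real (a - c) * v $ k" using k vc by simp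
          show ?thesis
          proof (cases "k = 1")
            case True then show ?thesis using sw1 d1 unfolding mv[OF vc k] rhs vk vs by (simp add: ring_distribs)
          next
            case n1: False
            show ?thesis
            proof (cases "k = d")
              case True then show ?thesis using swd d1 unfolding mv[OF vc k] rhs vk vs by (simp add: ring_distribs)
            next
              case False then show ?thesis using n1 swk[OF k n1 False] unfolding mv[OF vc k] rhs vk vs by simp
            qed
          qed
        qed
      qed (simp add: dimAv dimA v_def)
    qed
    then show "\<exists>t::real. t < 0 \<and> eigenvalue ?A (complex_of_real t)"
      using ac unfolding eigenvalue_def by (intro exI[of _ "a - c"]) auto
  qed
  show ?thesis using k1 k2 k3 by simp
qed


end
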